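(* For every reduction $S$ in a TRS the following equivalences hold: (i) $S$ starting in $s$ is strongly $p$-continuous and total iff $S$ starting in $s$ is strongly $m$-continuous; and (ii) $S$ strongly $p$-converges from $s$ to $t$ and is total iff $S$ strongly $m$-converges from $s$ to $t$.
   Context: Partial terms are (possibly infinite) terms over $\Sigma_\bot=\Sigma\uplus\{\bot\}$; total terms contain no $\bot$. $s\le_\bot t$ iff $s$ arises from $t$ by replacing some subterm occurrences by $\bot$; this is a complete semilattice. For a non-empty sequence, $\liminf_{\iota\to\alpha}a_\iota=\bigvee_{\beta<\alpha}\bigwedge_{\beta\le\iota<\alpha}a_\iota$. On total terms $d(s,t)=2^{-k}$, $k$ the minimal depth where they differ. For a reduction $S=(t_\iota\to_{\pi_\iota}t_{\iota+1})_{\iota<\alpha}$ let $c_\iota$ be $t_\iota$ with the subterm at $\pi_\iota$ replaced by $\bot$. $S$ is strongly $p$-continuous if $\liminf_{\iota\to\lambda}c_\iota=t_\lambda$ for every limit $\lambda<\alpha$; it strongly $p$-converges to $t$ if it is strongly $p$-continuous and either $S$ is closed and $t$ is its last term, or $S$ is open and $t=\liminf_{\iota\to\alpha}c_\iota$. $S$ is strongly $m$-continuous if for every limit $\lambda<\alpha$, $\lim_{\iota\to\lambda}t_\iota=t_\lambda$ in $d$ and the depths $|\pi_\iota|$ tend to infinity as $\iota\to\lambda$; it strongly $m$-converges to $t$ if it is strongly $m$-continuous, $t=\lim_{\iota\to\hat\alpha}t_\iota$ ($\hat\alpha=\alpha+1$ for closed, $\alpha$ for open $S$), and, if $S$ is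 open, $|\pi_\iota|$ tends to infinity as $\iota\to\alpha$. "Total" means all terms of $S$ and the final term are total. *)

theory Defs
  imports Complex_Main
begin

text \<open>Node labels: function symbols of the signature, variables, and the extra
  nullary symbol bottom.  A term is a partial map from positions to labels.\<close>

datatype ('f, 'v) sym = FunS 'f | VarS 'v | BotS

type_synonym ('f, 'v) pterm = "nat list \<Rightarrow> ('f, 'v) sym option"

definition wf_term :: "('f \<Rightarrow> nat) \<Rightarrow> ('f, 'v) pterm \<Rightarrow> bool" where
  "wf_term ar t \<longleftrightarrow> t [] \<noteq> None \<and>
     (\<forall>p i. t (p @ [i]) \<noteq> None \<longleftrightarrow> (\<exists>f. t p = Some (FunS f) \<and> i < ar f))"

definition pos :: "('f, 'v) pterm \<Rightarrow> nat list set" where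
  "pos t = {p. t p \<noteq> None}"

definition total_term :: "('f, 'v) pterm \<Rightarrow> bool" where
  "total_term t \<longleftrightarrow> (\<forall>p. t p \<noteq> Some BotS)"

definition vars_term :: "('f, 'v) pterm \<Rightarrow> 'v set" where
  "vars_term t = {x. \<exists>p. t p = Some (VarS x)}"

definition bot_term :: "('f, 'v) pterm" where
  "bot_term = (\<lambda>p. if p = [] then Some BotS else None)"

definition strict_prefix_pos :: "nat list \<Rightarrow> nat list \<Rightarrow> bool" where
  "strict_prefix_pos q p \<longleftrightarrow> take (length q) p = q \<and> length q < length p"

definition subterm_at :: "('f, 'v) pterm \<Rightarrow> nat list \<Rightarrow> ('f, 'v) pterm" where
  "subterm_at t q = (\<lambda>p. t (q @ p))"

definition replace_at :: "('f, 'v) pterm \<Rightarrow> nat list \<Rightarrow> ('f, 'v) pterm \<Rightarrow> ('f, 'v) pterm" where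
  "replace_at t q u = (\<lambda>p. if take (length q) p = q then u (drop (length q) p) else t p)"

fun inst :: "('v \<Rightarrow> ('f, 'v) pterm) \<Rightarrow> ('f, 'v) pterm \<Rightarrow> ('f, 'v) pterm" where
  "inst \<sigma> r [] = (case r [] of Some (VarS x) \<Rightarrow> \<sigma> x [] | c \<Rightarrow> c)"
| "inst \<sigma> r (i # p) = (case r [] of Some (VarS x) \<Rightarrow> \<sigma> x (i # p)
                                   | _ \<Rightarrow> inst \<sigma> (\<lambda>q. r (i # q)) p)"

definition le_bot :: "('f, 'v) pterm \<Rightarrow> ('f, 'v) pterm \<Rightarrow> bool" where
  "le_bot s t \<longleftrightarrow> (\<exists>P \<subseteq> pos t.
      s = (\<lambda>p. if \<exists>q\<in>P. strict_prefix_pos q p then None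
               else if p \<in> P then Some BotS else t p))"

definition is_glb :: "('f \<Rightarrow> nat) \<Rightarrow> ('f, 'v) pterm set \<Rightarrow> ('f, 'v) pterm \<Rightarrow> bool" where
  "is_glb ar A x \<longleftrightarrow> wf_term ar x \<and> (\<forall>a\<in>A. le_bot x a) \<and>
     (\<forall>y. wf_term ar y \<and> (\<forall>a\<in>A. le_bot y a) \<longrightarrow> le_bot y x)"

definition is_lub :: "('f \<Rightarrow> nat) \<Rightarrow> ('f, 'v) pterm set \<Rightarrow> ('f, 'v) pterm \<Rightarrow> bool" where
  "is_lub ar A x \<longleftrightarrow> wf_term ar x \<and> (\<forall>a\<in>A. le_bot a x) \<and>
     (\<forall>y. wf_term ar y \<and> (\<forall>a\<in>A. le_bot a y) \<longrightarrow> le_bot x y)"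

definition is_liminf :: "('f \<Rightarrow> nat) \<Rightarrow> ('i::wellorder \<Rightarrow> ('f, 'v) pterm) \<Rightarrow> 'i \<Rightarrow> ('f, 'v) pterm \<Rightarrow> bool" where
  "is_liminf ar a \<alpha> u \<longleftrightarrow> (\<exists>g. (\<forall>\<beta><\<alpha>. is_glb ar {a \<iota> | \<iota>. \<beta> \<le> \<iota> \<and> \<iota> < \<alpha>} (g \<beta>)) \<and>
                                is_lub ar (g ` {\<beta>. \<beta> < \<alpha>}) u)"

definition term_dist :: "('f, 'v) pterm \<Rightarrow> ('f, 'v) pterm \<Rightarrow> real" where
  "term_dist s t = (if s = t then 0
     else (1/2) ^ (LEAST k. \<exists>p. length p = k \<and> s p \<noteq> t p))"

text \<open>Ordinals are represented by elements of an arbitrary well-ordered type.\<close>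
definition idx_zero :: "'i::wellorder" where
  "idx_zero = (LEAST x. True)"

definition idx_succ :: "'i::wellorder \<Rightarrow> 'i" where
  "idx_succ i = (LEAST k. i < k)"

definition is_limit :: "'i::wellorder \<Rightarrow> bool" where
  "is_limit l \<longleftrightarrow> (\<exists>i. i < l) \<and> (\<forall>i<l. \<exists>k. i < k \<and> k < l)"

text \<open>A reduction of length \<alpha> is closed iff \<alpha> is zero or a successor, open iff \<alpha> is a limit.\<close>
abbreviation closed_len :: "'i::wellorder \<Rightarrow> bool" where
  "closed_len \<alpha> \<equiv> \<not> is_limit \<alpha>"

definition trs :: "('f \<Rightarrow> nat) \<Rightarrow> (('f, 'v) pterm \<times> ('f, 'v) pterm) set \<Rightarrow> bool" where
  "trs ar R \<longleftrightarrow> (\<forall>(l, r)\<in>R. wf_term ar l \<and> wf_term ar r \<and> total_term l \<and> total_term r \<and>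
      finite (pos l) \<and> (\<forall>x. l [] \<noteq> Some (VarS x)) \<and> vars_term r \<subseteq> vars_term l)"

definition rstep :: "(('f, 'v) pterm \<times> ('f, 'v) pterm) set \<Rightarrow> ('f, 'v) pterm \<Rightarrow> nat list \<Rightarrow> ('f, 'v) pterm \<Rightarrow> bool" where
  "rstep R s \<pi> t \<longleftrightarrow> \<pi> \<in> pos s \<and> (\<exists>(l, r)\<in>R. \<exists>\<sigma>.
      subterm_at s \<pi> = inst \<sigma> l \<and> t = replace_at s \<pi> (inst \<sigma> r))"

definition term_idx :: "'i::wellorder \<Rightarrow> 'i \<Rightarrow> bool" where
  "term_idx \<alpha> i \<longleftrightarrow> i < \<alpha> \<or> (closed_len \<alpha> \<and> i = \<alpha>)"

definition reduction_from ::
  "('f \<Rightarrow> nat) \<Rightarrow> (('f, 'v) pterm \<times> ('f, 'v) pterm) set \<Rightarrow> ('f, 'v) pterm \<Rightarrow>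
   'i::wellorder \<Rightarrow> ('i \<Rightarrow> ('f, 'v) pterm) \<Rightarrow> ('i \<Rightarrow> nat list) \<Rightarrow> bool" where
  "reduction_from ar R s \<alpha> t \<pi> \<longleftrightarrow> t idx_zero = s \<and>
     (\<forall>i. term_idx \<alpha> i \<longrightarrow> wf_term ar (t i)) \<and>
     (\<forall>i<\<alpha>. rstep R (t i) (\<pi> i) (t (idx_succ i)))"

definition total_red :: "'i::wellorder \<Rightarrow> ('i \<Rightarrow> ('f, 'v) pterm) \<Rightarrow> bool" where
  "total_red \<alpha> t \<longleftrightarrow> (\<forall>i. term_idx \<alpha> i \<longrightarrow> total_term (t i))"

definition ctx_term :: "('i \<Rightarrow> ('f, 'v) pterm) \<Rightarrow> ('i \<Rightarrow> nat list) \<Rightarrow> 'i \<Rightarrow> ('f, 'v) pterm" where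
  "ctx_term t \<pi> i = replace_at (t i) (\<pi> i) bot_term"

definition strongly_p_continuous ::
  "('f \<Rightarrow> nat) \<Rightarrow> 'i::wellorder \<Rightarrow> ('i \<Rightarrow> ('f, 'v) pterm) \<Rightarrow> ('i \<Rightarrow> nat list) \<Rightarrow> bool" where
  "strongly_p_continuous ar \<alpha> t \<pi> \<longleftrightarrow>
     (\<forall>l<\<alpha>. is_limit l \<longrightarrow> is_liminf ar (ctx_term t \<pi>) l (t l))"

definition strongly_p_converges ::
  "('f \<Rightarrow> nat) \<Rightarrow> 'i::wellorder \<Rightarrow> ('i \<Rightarrow> ('f, 'v) pterm) \<Rightarrow> ('i \<Rightarrow> nat list) \<Rightarrow> ('f, 'v) pterm \<Rightarrow> bool" where
  "strongly_p_converges ar \<alpha> t \<pi> u \<longleftrightarrow> strongly_p_continuous ar \<alpha> t \<pi> \<and>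
     ((closed_len \<alpha> \<and> u = t \<alpha>) \<or> (is_limit \<alpha> \<and> is_liminf ar (ctx_term t \<pi>) \<alpha> u))"

definition converges_to :: "('i::wellorder \<Rightarrow> ('f, 'v) pterm) \<Rightarrow> 'i \<Rightarrow> ('f, 'v) pterm \<Rightarrow> bool" where
  "converges_to t l u \<longleftrightarrow>
     (\<forall>e>0. \<exists>b<l. \<forall>i. b \<le> i \<and> i < l \<longrightarrow> term_dist (t i) u < e)"

definition depth_to_infinity :: "('i::wellorder \<Rightarrow> nat list) \<Rightarrow> 'i \<Rightarrow> bool" where
  "depth_to_infinity \<pi> l \<longleftrightarrow> (\<forall>n. \<exists>b<l. \<forall>i. b \<le> i \<and> i < l \<longrightarrow> n \<le> length (\<pi> i))"

definition strongly_m_continuous ::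
  "'i::wellorder \<Rightarrow> ('i \<Rightarrow> ('f, 'v) pterm) \<Rightarrow> ('i \<Rightarrow> nat list) \<Rightarrow> bool" where
  "strongly_m_continuous \<alpha> t \<pi> \<longleftrightarrow> total_red \<alpha> t \<and>
     (\<forall>l<\<alpha>. is_limit l \<longrightarrow> converges_to t l (t l) \<and> depth_to_infinity \<pi> l)"

definition strongly_m_converges ::
  "'i::wellorder \<Rightarrow> ('i \<Rightarrow> ('f, 'v) pterm) \<Rightarrow> ('i \<Rightarrow> nat list) \<Rightarrow> ('f, 'v) pterm \<Rightarrow> bool" where
  "strongly_m_converges \<alpha> t \<pi> u \<longleftrightarrow> strongly_m_continuous \<alpha> t \<pi> \<and> total_term u \<and>
     ((closed_len \<alpha> \<and> u = t \<alpha>) \<or>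
      (is_limit \<alpha> \<and> converges_to t \<alpha> u \<and> depth_to_infinity \<pi> \<alpha>))"

end

theory Submission
  imports Defs
begin

lemma wf_parent: "wf_term ar t \<Longrightarrow> t (p@[i]) \<noteq> None \<Longrightarrow> \<exists>f. t p = Some (FunS f) \<and> i < ar f"
  unfolding wf_term_def by blast

lemma wf_child: "wf_term ar t \<Longrightarrow> t p = Some (FunS f) \<Longrightarrow> i < ar f \<Longrightarrow> t (p@[i]) \<noteq> None"
  unfolding wf_term_def by blast

lemma wf_root: "wf_term ar t \<Longrightarrow> t [] \<noteq> None"
  unfolding wf_term_def by blast

lemma wf_prefix_fun: "wf_term ar t \<Longrightarrow> t (r@s) \<noteq> None \<Longrightarrow> s \<noteq> [] \<Longrightarrow> \<exists>f. t r = Some (FunS f)"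
proof (induction s rule: rev_induct)
  case Nil then show ?case by simp
next
  case (snoc x xs)
  from wf_parent[OF snoc.prems(1), of "r@xs" x] snoc.prems(2)
  obtain f where f: "t (r@xs) = Some (FunS f)" by auto
  show ?case
  proof (cases "xs = []")
    case True then show ?thesis using f by auto
  next
    case False then show ?thesis using snoc.IH[OF snoc.prems(1)] f by auto
  qed
qed

lemma strict_prefix_iff: "strict_prefix_pos r p \<longleftrightarrow> (\<exists>s. s \<noteq> [] \<and> p = r @ s)"
proof
  assume a: "strict_prefix_pos r p"
  then have "p = r @ drop (length r) p" unfolding strict_prefix_pos_def
    by (metis append_take_drop_id)
  moreover have "drop (length r) p \<noteq> []" using a unfolding strict_prefix_pos_def by simp
  ultimately show "\<exists>s. s \<noteq> [] \<and> p = r @ s" by blast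
qed (auto simp: strict_prefix_pos_def)

lemma strict_prefix_snoc: "strict_prefix_pos r (p@[i]) \<longleftrightarrow> r = p \<or> strict_prefix_pos r p"
  unfolding strict_prefix_pos_def
  by (cases "length r = length p") (auto simp: take_append)

lemma le_bot_imp: "le_bot s t \<Longrightarrow> s p \<noteq> None \<Longrightarrow> s p \<noteq> Some BotS \<Longrightarrow> s p = t p"
  unfolding le_bot_def by (auto split: if_splits)

lemma le_bot_defined:
  assumes "wf_term ar s" "wf_term ar t" "\<forall>p. s p \<noteq> None \<longrightarrow> s p = Some BotS \<or> s p = t p"
  shows "s p \<noteq> None \<Longrightarrow> t p \<noteq> None"
proof (induction p rule: rev_induct)
  case Nil then show ?case using wf_root[OF assms(2)] by simp
next
  case (snoc i q)
  from wf_parent[OF assms(1) snoc.prems] obtain f where f: "s q = Some (FunS f)" "i < ar f" by auto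
  then have "t q = Some (FunS f)" using assms(3) by (metis option.distinct(1) option.inject sym.distinct(3))
  then show ?case using wf_child[OF assms(2)] f by blast
qed

lemma le_bot_none:
  assumes "wf_term ar s" "wf_term ar t" "\<forall>p. s p \<noteq> None \<longrightarrow> s p = Some BotS \<or> s p = t p"
  shows "s p = None \<Longrightarrow> \<not>(\<exists>q. strict_prefix_pos q p \<and> s q = Some BotS) \<Longrightarrow> t p = None"
proof (induction p rule: rev_induct)
  case Nil then show ?case using wf_root[OF assms(1)] by simp
next
  case (snoc i q)
  show ?case
  proof (cases "s q = None")
    case True
    then have "t q = None" using snoc.IH snoc.prems(2) strict_prefix_snoc by blast
    then show ?thesis using wf_parent[OF assms(2), of q i] by (metis option.distinct(1))
  next
    case False
    then have "s q \<noteq> Some BotS" using snoc.prems(2) strict_prefix_snoc by blast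
    then have e: "t q = s q" using False assms(3) by metis
    have nf: "\<not> (\<exists>f. s q = Some (FunS f) \<and> i < ar f)" using snoc.prems(1) wf_child[OF assms(1)] by blast
    show ?thesis
    proof (rule ccontr)
      assume "t (q@[i]) \<noteq> None"
      then obtain f where "t q = Some (FunS f)" "i < ar f" using wf_parent[OF assms(2)] by blast
      then show False using e nf by simp
    qed
  qed
qed

lemma le_bot_intro:
  assumes "wf_term ar s" "wf_term ar t" "\<forall>p. s p \<noteq> None \<longrightarrow> s p = Some BotS \<or> s p = t p"
  shows "le_bot s t"
proof -
  let ?P = "{p. s p = Some BotS}"
  have sub: "?P \<subseteq> pos t" using le_bot_defined[OF assms] unfolding pos_def by auto
  have "s = (\<lambda>p. if \<exists>q\<in>?P. strict_prefix_pos q p then None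
               else if p \<in> ?P then Some BotS else t p)"
  proof
    fix p
    show "s p = (if \<exists>q\<in>?P. strict_prefix_pos q p then None
               else if p \<in> ?P then Some BotS else t p)"
    proof (cases "\<exists>q\<in>?P. strict_prefix_pos q p")
      case True
      then obtain q r where "s q = Some BotS" "r \<noteq> []" "p = q @ r" using strict_prefix_iff by auto
      have "s p = None"
      proof (rule ccontr)
        assume "s p \<noteq> None"
        then obtain f where "s q = Some (FunS f)" using wf_prefix_fun[OF assms(1), of q r] \<open>r \<noteq> []\<close> \<open>p = q @ r\<close> by blast
        then show False using \<open>s q = Some BotS\<close> by simp
      qed
      then show ?thesis using True by simp
    next
      case False
      show ?thesis
      proof (cases "s p = None")
        case True
        then have "t p = None" using False le_bot_none[OF assms] by blast
        then show ?thesis using True False by simp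
      next
        case n: False then show ?thesis using False assms(3) by auto
      qed
    qed
  qed
  then show ?thesis unfolding le_bot_def using sub by blast
qed

lemma ctx_wf:
  assumes wt: "wf_term ar t" and qp: "q \<in> pos t"
  shows "wf_term ar (replace_at t q bot_term)"
proof -
  let ?c = "replace_at t q bot_term"
  have ceq: "?c p = (if take (length q) p = q then (if length p = length q then Some BotS else None) else t p)" for p
  proof (cases "take (length q) p = q")
    case True
    then have "length (take (length q) p) = length q" by simp
    then have "length q \<le> length p" by (simp add: min_def split: if_splits)
    then show ?thesis using True unfolding replace_at_def bot_term_def by auto
  qed (simp add: replace_at_def)
  have tq: "t q \<noteq> None" using qp unfolding pos_def by simp
  have root: "?c [] \<noteq> None"
    using ceq[of "[]"] wf_root[OF wt] by (cases q) auto
  have step: "?c (p@[i]) \<noteq> None \<longleftrightarrow> (\<exists>f. ?c p = Some (FunS f) \<and> i < ar f)" for p i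
  proof (cases "take (length q) p = q")
    case True
    then have "length (take (length q) p) = length q" by simp
    then have "length q \<le> length p" by (simp add: min_def split: if_splits)
    moreover have "take (length q) (p@[i]) = q" using True \<open>length q \<le> length p\<close> by simp
    ultimately show ?thesis using ceq[of p] ceq[of "p@[i]"] True by auto
  next
    case False
    show ?thesis
    proof (cases "take (length q) (p@[i]) = q")
      case True
      have "\<not> length q \<le> length p" using True False by auto
      have "length (take (length q) (p@[i])) = length q" using True by simp
      then have "length q \<le> Suc (length p)" by (simp add: min_def split: if_splits)
      then have "length q = Suc (length p)" using \<open>\<not> length q \<le> length p\<close> by simp
      then have "q = p@[i]" using True by simp
      then have "\<exists>f. t p = Some (FunS f) \<and> i < ar f" using wf_parent[OF wt] tq by blast
      then show ?thesis using ceq[of p] ceq[of "p@[i]"] True False \<open>length q = Suc (length p)\<close> by auto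
    next
      case F2: False
      have w: "t (p@[i]) \<noteq> None \<longleftrightarrow> (\<exists>f. t p = Some (FunS f) \<and> i < ar f)"
        using wt unfolding wf_term_def by blast
      have "?c p = t p" "?c (p@[i]) = t (p@[i])" using ceq[of p] ceq[of "p@[i]"] False F2 by auto
      then show ?thesis using w by simp
    qed
  qed
  show ?thesis unfolding wf_term_def using root step by blast
qed

lemma finite_depth: "wf_term ar u \<Longrightarrow> finite {p. u p \<noteq> None \<and> length p \<le> d}"
proof (induction d)
  case 0
  have "{p. u p \<noteq> None \<and> length p \<le> 0} \<subseteq> {[]}" by auto
  then show ?case using finite_subset by blast
next
  case (Suc d)
  let ?S = "{p. u p \<noteq> None \<and> length p \<le> d}"
  let ?k = "\<lambda>q. (case u q of Some (FunS f) \<Rightarrow> ar f | _ \<Rightarrow> 0)"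
  have "{p. u p \<noteq> None \<and> length p \<le> Suc d} \<subseteq> ?S \<union> (\<Union>q\<in>?S. (\<lambda>i. q@[i]) ` {..<?k q})"
  proof
    fix p assume p: "p \<in> {p. u p \<noteq> None \<and> length p \<le> Suc d}"
    show "p \<in> ?S \<union> (\<Union>q\<in>?S. (\<lambda>i. q@[i]) ` {..<?k q})"
    proof (cases "length p \<le> d")
      case True then show ?thesis using p by auto
    next
      case False
      then obtain q i where qi: "p = q@[i]" by (metis le0 list.size(3) rev_exhaust)
      then obtain f where f: "u q = Some (FunS f)" "i < ar f" using wf_parent[OF Suc.prems] p by blast
      have "q \<in> ?S" using p qi f by auto
      moreover have "i \<in> {..<?k q}" using f by simp
      ultimately show ?thesis using qi by blast
    qed
  qed
  moreover have "finite (?S \<union> (\<Union>q\<in>?S. (\<lambda>i. q@[i]) ` {..<?k q}))" using Suc by simp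
  ultimately show ?case using finite_subset by blast
qed

lemma agree_dist:
  assumes "\<forall>p. length p \<le> d \<longrightarrow> s p = u p"
  shows "term_dist s u < (1/2)^d"
proof (cases "s = u")
  case True then show ?thesis unfolding term_dist_def by simp
next
  case False
  then obtain p0 where "s p0 \<noteq> u p0" by auto
  then have ex: "\<exists>k. \<exists>p. length p = k \<and> s p \<noteq> u p" by blast
  let ?K = "LEAST k. \<exists>p. length p = k \<and> s p \<noteq> u p"
  obtain p where pK: "length p = ?K" and pne: "s p \<noteq> u p" using LeastI_ex[OF ex] by blast
  have "d < ?K"
  proof (rule ccontr)
    assume "\<not> d < ?K"
    then have "length p \<le> d" using pK by simp
    then show False using assms pne by blast
  qed
  then have "(1/2::real)^?K < (1/2)^d" by (rule power_strict_decreasing) auto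
  then show ?thesis using False unfolding term_dist_def by simp
qed

lemma dist_agree:
  assumes "term_dist s u < (1/2)^d" "length p \<le> d"
  shows "s p = u p"
proof (rule ccontr)
  assume ne: "s p \<noteq> u p"
  then have su: "s \<noteq> u" by auto
  let ?K = "LEAST k. \<exists>p. length p = k \<and> s p \<noteq> u p"
  have "?K \<le> length p" using ne by (intro Least_le) blast
  then have "?K \<le> d" using assms(2) by simp
  then have "(1/2::real)^d \<le> (1/2)^?K" by (rule power_decreasing) auto
  then show False using assms(1) su unfolding term_dist_def by simp
qed

lemma conv_agree:
  assumes "converges_to t l u"
  shows "\<exists>b<l. \<forall>i. b \<le> i \<and> i < l \<longrightarrow> (\<forall>p. length p \<le> d \<longrightarrow> t i p = u p)"
proof -
  have "(0::real) < (1/2)^d" by simp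
  then obtain b where "b < l" "\<forall>i. b \<le> i \<and> i < l \<longrightarrow> term_dist (t i) u < (1/2)^d"
    using assms unfolding converges_to_def by blast
  then show ?thesis using dist_agree by blast
qed

lemma agree_conv:
  assumes "\<forall>d. \<exists>b<l. \<forall>i. b \<le> i \<and> i < l \<longrightarrow> (\<forall>p. length p \<le> d \<longrightarrow> t i p = u p)"
  shows "converges_to t l u"
  unfolding converges_to_def
proof (intro allI impI)
  fix e :: real assume "e > 0"
  then obtain n where n: "(1/2::real)^n < e" using real_arch_pow_inv[of e "1/2"] by auto
  obtain b where "b < l" "\<forall>i. b \<le> i \<and> i < l \<longrightarrow> (\<forall>p. length p \<le> n \<longrightarrow> t i p = u p)"
    using assms by blast
  then show "\<exists>b<l. \<forall>i. b \<le> i \<and> i < l \<longrightarrow> term_dist (t i) u < e"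
    using agree_dist n by (meson order.strict_trans)
qed

lemma agree_extend:
  assumes ws: "wf_term ar s" and wu: "wf_term ar u"
    and ag: "\<forall>p. u p \<noteq> None \<and> length p \<le> d \<longrightarrow> s p = u p"
  shows "length p \<le> d \<Longrightarrow> s p = u p"
proof (induction p rule: rev_induct)
  case Nil then show ?case using ag wf_root[OF wu] by simp
next
  case (snoc i q)
  then have e: "s q = u q" by simp
  show ?case
  proof (cases "u (q@[i]) = None")
    case True
    have "s (q@[i]) = None"
    proof (rule ccontr)
      assume "s (q@[i]) \<noteq> None"
      then obtain f where "s q = Some (FunS f)" "i < ar f" using wf_parent[OF ws] by blast
      then have "u q = Some (FunS f)" "i < ar f" using e by auto
      then have "u (q@[i]) \<noteq> None" using wf_child[OF wu] by blast
      then show False using True by simp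
    qed
    then show ?thesis using True by simp
  next
    case False then show ?thesis using ag snoc.prems by blast
  qed
qed

definition glbT :: "('f, 'v) pterm set \<Rightarrow> ('f, 'v) pterm" where
  "glbT A = (\<lambda>p. if (\<forall>r. strict_prefix_pos r p \<longrightarrow> (\<exists>f. \<forall>a\<in>A. a r = Some (FunS f)))
     then (if (\<forall>a\<in>A. a p = (SOME a. a \<in> A) p) then (SOME a. a \<in> A) p else Some BotS) else None)"

lemma no_strict_prefix_nil: "\<not> strict_prefix_pos r []"
  unfolding strict_prefix_pos_def by simp

lemma glbT_is_glb:
  assumes ne: "A \<noteq> {}" and wA: "\<forall>a\<in>A. wf_term ar a"
  shows "is_glb ar A (glbT A)"
proof -
  define a0 where "a0 = (SOME a. a \<in> A)"
  have a0A: "a0 \<in> A" unfolding a0_def using ne by (simp add: some_in_eq)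
  define AG where "AG p = (\<forall>r. strict_prefix_pos r p \<longrightarrow> (\<exists>f. \<forall>a\<in>A. a r = Some (FunS f)))" for p
  have gdef: "glbT A p = (if AG p then (if (\<forall>a\<in>A. a p = a0 p) then a0 p else Some BotS) else None)" for p
    unfolding glbT_def AG_def a0_def by simp
  have wa0: "wf_term ar a0" using wA a0A by blast
  have AGsnoc: "AG (p@[i]) \<longleftrightarrow> AG p \<and> (\<exists>f. \<forall>a\<in>A. a p = Some (FunS f))" for p i
    unfolding AG_def strict_prefix_snoc by auto
  have root: "glbT A [] \<noteq> None"
  proof -
    have "AG []" unfolding AG_def using no_strict_prefix_nil by blast
    then show ?thesis using gdef[of "[]"] wf_root[OF wa0] by auto
  qed
  have step: "glbT A (p@[i]) \<noteq> None \<longleftrightarrow> (\<exists>f. glbT A p = Some (FunS f) \<and> i < ar f)" for p i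
  proof
    assume h: "glbT A (p@[i]) \<noteq> None"
    then have ag: "AG (p@[i])" using gdef[of "p@[i]"] by (auto split: if_splits)
    then obtain f where f: "\<forall>a\<in>A. a p = Some (FunS f)" and agp: "AG p" using AGsnoc by blast
    have a0f: "a0 p = Some (FunS f)" using f a0A by blast
    then have "\<forall>a\<in>A. a p = a0 p" using f by simp
    then have "glbT A p = a0 p" using gdef[of p] agp by simp
    then have gp: "glbT A p = Some (FunS f)" using a0f by simp
    have "i < ar f"
    proof (cases "\<forall>a\<in>A. a (p@[i]) = a0 (p@[i])")
      case True
      then have "a0 (p@[i]) \<noteq> None" using h gdef[of "p@[i]"] ag by auto
      then show ?thesis using wf_parent[OF wa0] f a0A by fastforce
    next
      case False
      then obtain a where aA: "a \<in> A" and "a (p@[i]) \<noteq> a0 (p@[i])" by blast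
      then have "a (p@[i]) \<noteq> None \<or> a0 (p@[i]) \<noteq> None" by auto
      then show ?thesis
      proof
        assume "a (p@[i]) \<noteq> None"
        then show ?thesis using wf_parent[of ar a p i] wA aA f by fastforce
      next
        assume "a0 (p@[i]) \<noteq> None"
        then show ?thesis using wf_parent[OF wa0] f a0A by fastforce
      qed
    qed
    then show "\<exists>f. glbT A p = Some (FunS f) \<and> i < ar f" using gp by blast
  next
    assume "\<exists>f. glbT A p = Some (FunS f) \<and> i < ar f"
    then obtain f where gp: "glbT A p = Some (FunS f)" and fi: "i < ar f" by blast
    then have agp: "AG p" and alleq: "\<forall>a\<in>A. a p = a0 p" and a0p: "a0 p = Some (FunS f)"
      using gdef[of p] by (auto split: if_splits)
    then have "AG (p@[i])" using AGsnoc by auto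
    moreover have "a0 (p@[i]) \<noteq> None" using wf_child[OF wa0 a0p fi] .
    ultimately show "glbT A (p@[i]) \<noteq> None" using gdef[of "p@[i]"] by auto
  qed
  have wg: "wf_term ar (glbT A)" unfolding wf_term_def using root step by blast
  have lower: "\<forall>a\<in>A. le_bot (glbT A) a"
  proof
    fix a assume aA: "a \<in> A"
    show "le_bot (glbT A) a"
    proof (rule le_bot_intro[OF wg])
      show "wf_term ar a" using wA aA by blast
      show "\<forall>p. glbT A p \<noteq> None \<longrightarrow> glbT A p = Some BotS \<or> glbT A p = a p"
        using gdef aA by auto
    qed
  qed
  have greatest: "le_bot y (glbT A)" if wy: "wf_term ar y" and yl: "\<forall>a\<in>A. le_bot y a" for y
  proof (rule le_bot_intro[OF wy wg], intro allI impI)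
    fix p assume yp: "y p \<noteq> None"
    show "y p = Some BotS \<or> y p = glbT A p"
    proof (cases "y p = Some BotS")
      case False
      have eq: "\<forall>a\<in>A. a p = y p"
      proof
        fix a assume "a \<in> A"
        then show "a p = y p" using le_bot_imp[of y a p] yl yp False by auto
      qed
      have "AG p" unfolding AG_def
      proof (intro allI impI)
        fix r assume "strict_prefix_pos r p"
        then obtain s where s: "s \<noteq> []" "p = r @ s" using strict_prefix_iff by blast
        then obtain f where yr: "y r = Some (FunS f)" using wf_prefix_fun[OF wy] yp by blast
        have "\<forall>a\<in>A. a r = y r"
        proof
          fix a assume "a \<in> A"
          then show "a r = y r" using le_bot_imp[of y a r] yl yr by auto
        qed
        then show "\<exists>f. \<forall>a\<in>A. a r = Some (FunS f)" using yr by auto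
      qed
      moreover have "\<forall>a\<in>A. a p = a0 p" using eq a0A by metis
      ultimately have "glbT A p = a0 p" using gdef[of p] by simp
      then show ?thesis using eq a0A by auto
    qed simp
  qed
  show ?thesis unfolding is_glb_def using wg lower greatest by blast
qed

lemma conv_wf:
  assumes wt: "\<forall>i<l. wf_term ar (t i)" and cv: "converges_to t l u"
  shows "wf_term ar u"
proof -
  obtain b where b: "b < l" "\<forall>i. b \<le> i \<and> i < l \<longrightarrow> (\<forall>p. length p \<le> 0 \<longrightarrow> t i p = u p)"
    using conv_agree[OF cv] by blast
  then have "t b [] = u []" by auto
  moreover have "t b [] \<noteq> None" using wf_root wt b(1) by blast
  ultimately have root: "u [] \<noteq> None" by simp
  have step: "u (p@[i]) \<noteq> None \<longleftrightarrow> (\<exists>f. u p = Some (FunS f) \<and> i < ar f)" for p i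
  proof -
    obtain b where b: "b < l" "\<forall>i. b \<le> i \<and> i < l \<longrightarrow> (\<forall>q. length q \<le> Suc (length p) \<longrightarrow> t i q = u q)"
      using conv_agree[OF cv] by blast
    then have "t b p = u p" "t b (p@[i]) = u (p@[i])" by auto
    moreover have "t b (p@[i]) \<noteq> None \<longleftrightarrow> (\<exists>f. t b p = Some (FunS f) \<and> i < ar f)"
      using wt b(1) unfolding wf_term_def by blast
    ultimately show ?thesis by simp
  qed
  show ?thesis unfolding wf_term_def using root step by blast
qed

lemma ctx_at: "ctx_term t \<pi> i (\<pi> i) = Some BotS"
  unfolding ctx_term_def replace_at_def bot_term_def by simp

lemma ctx_short: "length p < length (\<pi> i) \<Longrightarrow> ctx_term t \<pi> i p = t i p"
  unfolding ctx_term_def replace_at_def by auto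

lemma PM:
  fixes ar :: "'f \<Rightarrow> nat" and t :: "'i::wellorder \<Rightarrow> ('f, 'v) pterm" and \<pi> :: "'i \<Rightarrow> nat list"
    and u :: "('f, 'v) pterm" and l :: 'i
  assumes H: "\<forall>i<l. wf_term ar (t i) \<and> total_term (t i) \<and> \<pi> i \<in> pos (t i)"
    and wu: "wf_term ar u" and tu: "total_term u"
    and li: "is_liminf ar (ctx_term t \<pi>) l u"
  shows "converges_to t l u \<and> depth_to_infinity \<pi> l"
proof -
  let ?c = "ctx_term t \<pi>"
  have wc: "wf_term ar (?c i)" if "i < l" for i
    using ctx_wf H that unfolding ctx_term_def by blast
  obtain g where G: "\<forall>\<beta><l. is_glb ar {?c \<iota> | \<iota>. \<beta> \<le> \<iota> \<and> \<iota> < l} (g \<beta>)"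
    and L: "is_lub ar (g ` {\<beta>. \<beta> < l}) u"
    using li unfolding is_liminf_def by blast
  have gle: "le_bot (g \<beta>) (?c \<iota>)" if "\<beta> \<le> \<iota>" "\<iota> < l" for \<beta> \<iota>
  proof -
    have "\<beta> < l" using that by simp
    then have "is_glb ar {?c \<iota> | \<iota>. \<beta> \<le> \<iota> \<and> \<iota> < l} (g \<beta>)" using G by blast
    moreover have "?c \<iota> \<in> {?c \<iota> | \<iota>. \<beta> \<le> \<iota> \<and> \<iota> < l}" using that by blast
    ultimately show ?thesis unfolding is_glb_def by blast
  qed
  have gwf: "wf_term ar (g \<beta>)" if "\<beta> < l" for \<beta>
    using G that unfolding is_glb_def by blast
  have gu: "le_bot (g \<beta>) u" if "\<beta> < l" for \<beta>
    using L that unfolding is_lub_def by blast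
  have utot: "u p \<noteq> Some BotS" for p using tu unfolding total_term_def by blast
  have cover: "\<exists>\<beta><l. g \<beta> p = u p" if upn: "u p \<noteq> None" for p
  proof (rule ccontr)
    assume nc: "\<not> (\<exists>\<beta><l. g \<beta> p = u p)"
    define y where "y = replace_at u p bot_term"
    have wy: "wf_term ar y" unfolding y_def using ctx_wf[OF wu] upn unfolding pos_def by blast
    have "le_bot (g \<beta>) y" if bl: "\<beta> < l" for \<beta>
    proof (rule le_bot_intro[OF gwf[OF bl] wy], intro allI impI)
      fix q assume gq: "g \<beta> q \<noteq> None"
      show "g \<beta> q = Some BotS \<or> g \<beta> q = y q"
      proof (cases "g \<beta> q = Some BotS")
        case False
        then have e: "g \<beta> q = u q" using le_bot_imp[OF gu[OF bl] gq] by simp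
        have "\<not> take (length p) q = p"
        proof
          assume tk: "take (length p) q = p"
          then have qd: "q = p @ drop (length p) q" by (metis append_take_drop_id)
          show False
          proof (cases "drop (length p) q = []")
            case True then have "q = p" using qd by simp
            then show False using e nc bl by blast
          next
            case F2: False
            have "g \<beta> (p @ drop (length p) q) \<noteq> None" using qd gq by simp
            then obtain f where gf: "g \<beta> p = Some (FunS f)" using wf_prefix_fun[OF gwf[OF bl] _ F2] by blast
            then have "g \<beta> p = u p" using le_bot_imp[OF gu[OF bl]] by simp
            then show False using nc bl by blast
          qed
        qed
        then have "y q = u q" unfolding y_def replace_at_def by simp
        then show ?thesis using e by simp
      qed simp
    qed
    then have luy: "le_bot u y" using L wy unfolding is_lub_def by blast
    have "y p = Some BotS" unfolding y_def replace_at_def bot_term_def by simp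
    moreover have "u p = y p" using le_bot_imp[OF luy upn utot] .
    ultimately show False using utot by simp
  qed
  have unif: "\<exists>B<l. \<forall>\<iota>. B \<le> \<iota> \<and> \<iota> < l \<longrightarrow> (\<forall>p. length p \<le> d \<longrightarrow> ?c \<iota> p = u p)" for d
  proof -
    let ?P = "{p. u p \<noteq> None \<and> length p \<le> d}"
    have fin: "finite ?P" using finite_depth[OF wu] .
    have ex: "\<forall>p\<in>?P. \<exists>\<beta>. \<beta> < l \<and> g \<beta> p = u p" using cover by blast
    obtain bf where bf: "\<forall>p\<in>?P. bf p < l \<and> g (bf p) p = u p" using bchoice[OF ex] by blast
    have ne: "[] \<in> ?P" using wf_root[OF wu] by simp
    define B where "B = Max (bf ` ?P)"
    have "B \<in> bf ` ?P" unfolding B_def using fin ne by (intro Max_in) auto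
    then have Bl: "B < l" using bf by blast
    have "\<forall>\<iota>. B \<le> \<iota> \<and> \<iota> < l \<longrightarrow> (\<forall>p. length p \<le> d \<longrightarrow> ?c \<iota> p = u p)"
    proof (intro allI impI)
      fix \<iota> and p :: "nat list" assume \<iota>: "B \<le> \<iota> \<and> \<iota> < l" and lp: "length p \<le> d"
      have "\<forall>q. u q \<noteq> None \<and> length q \<le> d \<longrightarrow> ?c \<iota> q = u q"
      proof (intro allI impI)
        fix q assume q: "u q \<noteq> None \<and> length q \<le> d"
        then have qP: "q \<in> ?P" by simp
        have "bf q \<le> B" unfolding B_def using fin qP by simp
        then have le: "le_bot (g (bf q)) (?c \<iota>)" using gle \<iota> by auto
        have gq: "g (bf q) q = u q" using bf qP by blast
        then have "g (bf q) q = ?c \<iota> q" using le_bot_imp[OF le] q utot[of q] by simp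
        then show "?c \<iota> q = u q" using gq by simp
      qed
      then show "?c \<iota> p = u p" using agree_extend[OF wc wu] \<iota> lp by blast
    qed
    then show ?thesis using Bl by blast
  qed
  have main: "\<exists>B<l. \<forall>\<iota>. B \<le> \<iota> \<and> \<iota> < l \<longrightarrow> d < length (\<pi> \<iota>) \<and> (\<forall>p. length p \<le> d \<longrightarrow> t \<iota> p = u p)" for d
  proof -
    obtain B where B: "B < l" "\<forall>\<iota>. B \<le> \<iota> \<and> \<iota> < l \<longrightarrow> (\<forall>p. length p \<le> d \<longrightarrow> ?c \<iota> p = u p)"
      using unif by blast
    have "d < length (\<pi> \<iota>) \<and> (\<forall>p. length p \<le> d \<longrightarrow> t \<iota> p = u p)" if \<iota>: "B \<le> \<iota>" "\<iota> < l" for \<iota>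
    proof
      show dl: "d < length (\<pi> \<iota>)"
      proof (rule ccontr)
        assume "\<not> d < length (\<pi> \<iota>)"
        then have "?c \<iota> (\<pi> \<iota>) = u (\<pi> \<iota>)" using B \<iota> by simp
        then have "u (\<pi> \<iota>) = Some BotS" using ctx_at[of t \<pi> \<iota>] by simp
        then show False using utot by blast
      qed
      show "\<forall>p. length p \<le> d \<longrightarrow> t \<iota> p = u p"
      proof (intro allI impI)
        fix p :: "nat list" assume lp: "length p \<le> d"
        then have "length p < length (\<pi> \<iota>)" using dl by simp
        then have "?c \<iota> p = t \<iota> p" by (rule ctx_short)
        then show "t \<iota> p = u p" using B \<iota> lp by simp
      qed
    qed
    then show ?thesis using B(1) by blast
  qed
  have "converges_to t l u"
    by (rule agree_conv) (use main in blast)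
  moreover have "depth_to_infinity \<pi> l" unfolding depth_to_infinity_def
  proof
    fix n
    obtain B where "B < l" "\<forall>\<iota>. B \<le> \<iota> \<and> \<iota> < l \<longrightarrow> n < length (\<pi> \<iota>)" using main[of n] by blast
    then show "\<exists>b<l. \<forall>i. b \<le> i \<and> i < l \<longrightarrow> n \<le> length (\<pi> i)" by (meson less_imp_le)
  qed
  ultimately show ?thesis by blast
qed

lemma MP:
  fixes ar :: "'f \<Rightarrow> nat" and t :: "'i::wellorder \<Rightarrow> ('f, 'v) pterm" and \<pi> :: "'i \<Rightarrow> nat list"
    and u :: "('f, 'v) pterm" and l :: 'i
  assumes H: "\<forall>i<l. wf_term ar (t i) \<and> total_term (t i) \<and> \<pi> i \<in> pos (t i)"
    and wu: "wf_term ar u" and tu: "total_term u"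
    and cv: "converges_to t l u" and dp: "depth_to_infinity \<pi> l"
  shows "is_liminf ar (ctx_term t \<pi>) l u"
proof -
  let ?c = "ctx_term t \<pi>"
  have wc: "wf_term ar (?c i)" if "i < l" for i
    using ctx_wf H that unfolding ctx_term_def by blast
  have utot: "u p \<noteq> Some BotS" for p using tu unfolding total_term_def by blast
  have AGR: "\<exists>B<l. \<forall>\<iota>. B \<le> \<iota> \<and> \<iota> < l \<longrightarrow> (\<forall>p. length p \<le> d \<longrightarrow> ?c \<iota> p = u p)" for d
  proof -
    obtain b1 where b1: "b1 < l" "\<forall>i. b1 \<le> i \<and> i < l \<longrightarrow> (\<forall>p. length p \<le> d \<longrightarrow> t i p = u p)"
      using conv_agree[OF cv] by blast
    obtain b2 where b2: "b2 < l" "\<forall>i. b2 \<le> i \<and> i < l \<longrightarrow> Suc d \<le> length (\<pi> i)"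
      using dp unfolding depth_to_infinity_def by blast
    define B where "B = max b1 b2"
    have "B < l" using b1 b2 by (simp add: B_def)
    moreover have "\<forall>\<iota>. B \<le> \<iota> \<and> \<iota> < l \<longrightarrow> (\<forall>p. length p \<le> d \<longrightarrow> ?c \<iota> p = u p)"
    proof (intro allI impI)
      fix \<iota> and p :: "nat list" assume \<iota>: "B \<le> \<iota> \<and> \<iota> < l" and lp: "length p \<le> d"
      have "Suc d \<le> length (\<pi> \<iota>)" using b2 \<iota> unfolding B_def by simp
      then have "length p < length (\<pi> \<iota>)" using lp by simp
      then have "?c \<iota> p = t \<iota> p" by (rule ctx_short)
      moreover have "t \<iota> p = u p" using b1 \<iota> lp unfolding B_def by simp
      ultimately show "?c \<iota> p = u p" by simp
    qed
    ultimately show ?thesis by blast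
  qed
  define A where "A \<beta> = {?c \<iota> | \<iota>. \<beta> \<le> \<iota> \<and> \<iota> < l}" for \<beta>
  define g where "g \<beta> = glbT (A \<beta>)" for \<beta>
  have G: "is_glb ar (A \<beta>) (g \<beta>)" if "\<beta> < l" for \<beta>
    unfolding g_def
  proof (rule glbT_is_glb)
    show "A \<beta> \<noteq> {}" using that unfolding A_def by blast
    show "\<forall>a\<in>A \<beta>. wf_term ar a" using wc unfolding A_def by blast
  qed
  have gwf: "wf_term ar (g \<beta>)" if "\<beta> < l" for \<beta> using G[OF that] unfolding is_glb_def by blast
  have gle: "le_bot (g \<beta>) (?c \<iota>)" if "\<beta> \<le> \<iota>" "\<iota> < l" for \<beta> \<iota>
  proof -
    have "\<beta> < l" using that by simp
    moreover have "?c \<iota> \<in> A \<beta>" using that unfolding A_def by blast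
    ultimately show ?thesis using G unfolding is_glb_def by blast
  qed
  have low: "le_bot (g \<beta>) u" if bl: "\<beta> < l" for \<beta>
  proof (rule le_bot_intro[OF gwf[OF bl] wu], intro allI impI)
    fix p assume gp: "g \<beta> p \<noteq> None"
    show "g \<beta> p = Some BotS \<or> g \<beta> p = u p"
    proof (cases "g \<beta> p = Some BotS")
      case False
      obtain B where B: "B < l" "\<forall>\<iota>. B \<le> \<iota> \<and> \<iota> < l \<longrightarrow> (\<forall>q. length q \<le> length p \<longrightarrow> ?c \<iota> q = u q)"
        using AGR by blast
      define \<iota> where "\<iota> = max \<beta> B"
      have \<iota>: "\<beta> \<le> \<iota>" "B \<le> \<iota>" "\<iota> < l" using B bl by (auto simp: \<iota>_def)
      have "g \<beta> p = ?c \<iota> p" using le_bot_imp[OF gle[OF \<iota>(1) \<iota>(3)] gp False] .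
      also have "\<dots> = u p" using B \<iota> by simp
      finally show ?thesis by simp
    qed simp
  qed
  have up: "le_bot u y" if wy: "wf_term ar y" and ub: "\<forall>a\<in>g ` {\<beta>. \<beta> < l}. le_bot a y" for y
  proof (rule le_bot_intro[OF wu wy], intro allI impI)
    fix p assume upn: "u p \<noteq> None"
    obtain B where B: "B < l" "\<forall>\<iota>. B \<le> \<iota> \<and> \<iota> < l \<longrightarrow> (\<forall>q. length q \<le> length p \<longrightarrow> ?c \<iota> q = u q)"
      using AGR by blast
    have eqs: "\<forall>a\<in>A B. a q = u q" if "length q \<le> length p" for q
      using B that unfolding A_def by blast
    have AG: "\<forall>r. strict_prefix_pos r p \<longrightarrow> (\<exists>f. \<forall>a\<in>A B. a r = Some (FunS f))"
    proof (intro allI impI)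
      fix r assume "strict_prefix_pos r p"
      then obtain s where s: "s \<noteq> []" "p = r @ s" using strict_prefix_iff by blast
      then obtain f where uf: "u r = Some (FunS f)" using wf_prefix_fun[OF wu] upn by blast
      have "length r \<le> length p" using s by simp
      then have "\<forall>a\<in>A B. a r = u r" using eqs by blast
      then show "\<exists>f. \<forall>a\<in>A B. a r = Some (FunS f)" using uf by auto
    qed
    have "A B \<noteq> {}" using B(1) unfolding A_def by blast
    then have a0: "(SOME a. a \<in> A B) \<in> A B" by (simp add: some_in_eq)
    have ep: "\<forall>a\<in>A B. a p = u p" using eqs by blast
    then have a0p: "(SOME a. a \<in> A B) p = u p" using a0 by blast
    then have "\<forall>a\<in>A B. a p = (SOME a. a \<in> A B) p" using ep by simp
    then have gB: "g B p = u p" unfolding g_def glbT_def using AG a0p by simp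
    have "le_bot (g B) y" using ub B(1) by blast
    then have "g B p = y p" using le_bot_imp[of "g B" y p] gB upn utot[of p] by simp
    then show "u p = Some BotS \<or> u p = y p" using gB by simp
  qed
  have "is_lub ar (g ` {\<beta>. \<beta> < l}) u" unfolding is_lub_def using wu low up by blast
  moreover have "\<forall>\<beta><l. is_glb ar {?c \<iota> | \<iota>. \<beta> \<le> \<iota> \<and> \<iota> < l} (g \<beta>)" using G unfolding A_def by blast
  ultimately show ?thesis unfolding is_liminf_def by blast
qed

theorem theorem4p12:
  fixes ar :: "'f \<Rightarrow> nat"
    and R :: "(('f, 'v) pterm \<times> ('f, 'v) pterm) set"
    and s :: "('f, 'v) pterm"
    and \<alpha> :: "'i::wellorder"
    and t :: "'i \<Rightarrow> ('f, 'v) pterm"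
    and \<pi> :: "'i \<Rightarrow> nat list"
  assumes "trs ar R"
    and "reduction_from ar R s \<alpha> t \<pi>"
  shows "(strongly_p_continuous ar \<alpha> t \<pi> \<and> total_red \<alpha> t \<longleftrightarrow> strongly_m_continuous \<alpha> t \<pi>)
       \<and> (\<forall>u. strongly_p_converges ar \<alpha> t \<pi> u \<and> total_red \<alpha> t \<and> total_term u
               \<longleftrightarrow> strongly_m_converges \<alpha> t \<pi> u)"
proof -
  have wfall: "\<forall>i. term_idx \<alpha> i \<longrightarrow> wf_term ar (t i)"
    and steps: "\<forall>i<\<alpha>. rstep R (t i) (\<pi> i) (t (idx_succ i))"
    using assms(2) unfolding reduction_from_def by blast+
  have posp: "\<forall>i<\<alpha>. \<pi> i \<in> pos (t i)" using steps unfolding rstep_def by blast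
  have wfl: "\<forall>i<\<alpha>. wf_term ar (t i)" using wfall unfolding term_idx_def by blast
  have Hl: "\<forall>i<l. wf_term ar (t i) \<and> total_term (t i) \<and> \<pi> i \<in> pos (t i)"
    if "l \<le> \<alpha>" "total_red \<alpha> t" for l
  proof (intro allI impI)
    fix i assume "i < l"
    then have "i < \<alpha>" using that(1) by simp
    then show "wf_term ar (t i) \<and> total_term (t i) \<and> \<pi> i \<in> pos (t i)"
      using wfl posp that(2) unfolding total_red_def term_idx_def by blast
  qed
  have tl: "wf_term ar (t l) \<and> total_term (t l)" if "l < \<alpha>" "total_red \<alpha> t" for l
    using that wfl unfolding total_red_def term_idx_def by blast
  have part1: "strongly_p_continuous ar \<alpha> t \<pi> \<and> total_red \<alpha> t \<longleftrightarrow> strongly_m_continuous \<alpha> t \<pi>"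
  proof
    assume a: "strongly_p_continuous ar \<alpha> t \<pi> \<and> total_red \<alpha> t"
    have "converges_to t l (t l) \<and> depth_to_infinity \<pi> l" if "l < \<alpha>" "is_limit l" for l
    proof (rule PM)
      show "\<forall>i<l. wf_term ar (t i) \<and> total_term (t i) \<and> \<pi> i \<in> pos (t i)"
        using Hl[OF less_imp_le[OF that(1)]] a by blast
      show "wf_term ar (t l)" "total_term (t l)" using tl that a by blast+
      show "is_liminf ar (ctx_term t \<pi>) l (t l)"
        using a that unfolding strongly_p_continuous_def by blast
    qed
    then show "strongly_m_continuous \<alpha> t \<pi>" using a unfolding strongly_m_continuous_def by blast
  next
    assume m: "strongly_m_continuous \<alpha> t \<pi>"
    then have tr: "total_red \<alpha> t" unfolding strongly_m_continuous_def by blast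
    have "is_liminf ar (ctx_term t \<pi>) l (t l)" if "l < \<alpha>" "is_limit l" for l
    proof (rule MP)
      show "\<forall>i<l. wf_term ar (t i) \<and> total_term (t i) \<and> \<pi> i \<in> pos (t i)"
        using Hl[OF less_imp_le[OF that(1)] tr] .
      show "wf_term ar (t l)" "total_term (t l)" using tl that tr by blast+
      show "converges_to t l (t l)" "depth_to_infinity \<pi> l"
        using m that unfolding strongly_m_continuous_def by blast+
    qed
    then show "strongly_p_continuous ar \<alpha> t \<pi> \<and> total_red \<alpha> t"
      using tr unfolding strongly_p_continuous_def by blast
  qed
  have part2: "\<forall>u. strongly_p_converges ar \<alpha> t \<pi> u \<and> total_red \<alpha> t \<and> total_term u
               \<longleftrightarrow> strongly_m_converges \<alpha> t \<pi> u"
  proof (intro allI iffI)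
    fix u assume a: "strongly_p_converges ar \<alpha> t \<pi> u \<and> total_red \<alpha> t \<and> total_term u"
    then have mc: "strongly_m_continuous \<alpha> t \<pi>" using part1 unfolding strongly_p_converges_def by blast
    have tr: "total_red \<alpha> t" and tu: "total_term u" using a by blast+
    have disj: "(closed_len \<alpha> \<and> u = t \<alpha>) \<or> (is_limit \<alpha> \<and> is_liminf ar (ctx_term t \<pi>) \<alpha> u)"
      using a unfolding strongly_p_converges_def by blast
    have "(closed_len \<alpha> \<and> u = t \<alpha>) \<or> (is_limit \<alpha> \<and> converges_to t \<alpha> u \<and> depth_to_infinity \<pi> \<alpha>)"
    proof (cases "closed_len \<alpha> \<and> u = t \<alpha>")
      case False
      then have lim: "is_limit \<alpha>" and li: "is_liminf ar (ctx_term t \<pi>) \<alpha> u" using disj by blast+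
      have wu: "wf_term ar u" using li unfolding is_liminf_def is_lub_def by blast
      have "converges_to t \<alpha> u \<and> depth_to_infinity \<pi> \<alpha>"
        using PM[OF Hl[OF order_refl tr] wu tu li] .
      then show ?thesis using lim by blast
    qed blast
    then show "strongly_m_converges \<alpha> t \<pi> u" unfolding strongly_m_converges_def using mc tu by blast
  next
    fix u assume m: "strongly_m_converges \<alpha> t \<pi> u"
    then have mc: "strongly_m_continuous \<alpha> t \<pi>" and tu: "total_term u"
      unfolding strongly_m_converges_def by blast+
    then have pc: "strongly_p_continuous ar \<alpha> t \<pi>" and tr: "total_red \<alpha> t" using part1 by blast+
    have disj: "(closed_len \<alpha> \<and> u = t \<alpha>) \<or> (is_limit \<alpha> \<and> converges_to t \<alpha> u \<and> depth_to_infinity \<pi> \<alpha>)"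
      using m unfolding strongly_m_converges_def by blast
    have "(closed_len \<alpha> \<and> u = t \<alpha>) \<or> (is_limit \<alpha> \<and> is_liminf ar (ctx_term t \<pi>) \<alpha> u)"
    proof (cases "closed_len \<alpha> \<and> u = t \<alpha>")
      case False
      then have lim: "is_limit \<alpha>" and cv: "converges_to t \<alpha> u" and dp: "depth_to_infinity \<pi> \<alpha>"
        using disj by blast+
      have wu: "wf_term ar u" using conv_wf[OF wfl cv] .
      have "is_liminf ar (ctx_term t \<pi>) \<alpha> u" using MP[OF Hl[OF order_refl tr] wu tu cv dp] .
      then show ?thesis using lim by blast
    qed blast
    then show "strongly_p_converges ar \<alpha> t \<pi> u \<and> total_red \<alpha> t \<and> total_term u"
      unfolding strongly_p_converges_def using pc tr tu by blast
  qed
  show ?thesis using part1 part2 by blast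
qed

end
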